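(* Let $\bar\gamma_{\mathrm{R}},\bar\gamma_{\mathrm{D}},\bar\gamma_{\mathrm{E}}>0$ and $\mathcal{R}>0$. Let $h_{\mathrm{S},\mathrm{R}},h_{\mathrm{R},\mathrm{D}},h_{\mathrm{S},\mathrm{E}}$ be independent $\mathcal{CN}(0,1)$ random variables. Define $$\mathcal{R}^{2}_{\mathrm{S}\to\mathrm{R}}=\log_2\frac{1+\bar\gamma_{\mathrm{R}}|h_{\mathrm{S},\mathrm{R}}|^2}{1+\bar\gamma_{\mathrm{E}}|h_{\mathrm{S},\mathrm{E}}|^2},\qquad \mathcal{R}^{2}_{\mathrm{R}\to\mathrm{D}}=\log_2\left(1+\bar\gamma_{\mathrm{D}}|h_{\mathrm{R},\mathrm{D}}|^2\right),$$ $\mathcal{R}_2=\max\{\min\{\mathcal{R}^{2}_{\mathrm{S}\to\mathrm{R}},\mathcal{R}^{2}_{\mathrm{R}\to\mathrm{D}}\},0\}$ and $\mathcal{P}_2=\Pr(\mathcal{R}_2<\mathcal{R})$. Then $$\mathcal{P}_2=1-\mathrm{e}^{-\frac{2^{\mathcal{R}}-1}{\bar\gamma_{\mathrm{D}}}-\frac{2^{\mathcal{R}}-1}{\bar\gamma_{\mathrm{R}}}}\cdot\frac{1}{1+\frac{2^{\mathcal{R}}}{\bar\gamma_{\mathrm{R}}}\bar\gamma_{\mathrm{E}}}.$$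
   Context: This models a decode-and-forward relay system (source S, relay R, destination D, eavesdropper E) where the eavesdropper overhears only the source's transmission. $\mathcal{CN}(0,1)$ denotes a circularly symmetric complex Gaussian random variable with zero mean and unit variance (Rayleigh fading). $\bar\gamma$'s are average SNRs, $\mathcal{R}_2$ the secrecy capacity and $\mathcal{P}_2$ the secrecy outage probability. *)

theory Defs
  imports "HOL-Probability.Probability"
begin

definition CN01 :: "'a measure \<Rightarrow> ('a \<Rightarrow> complex) \<Rightarrow> bool" where
  "CN01 M h \<longleftrightarrow> distributed M lborel h (\<lambda>z. ennreal (exp (- (cmod z)\<^sup>2) / pi))"

definition rate_SR2 :: "real \<Rightarrow> real \<Rightarrow> complex \<Rightarrow> complex \<Rightarrow> real" where
  "rate_SR2 gR gE hSR hSE = log 2 ((1 + gR * (cmod hSR)\<^sup>2) / (1 + gE * (cmod hSE)\<^sup>2))"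

definition rate_RD2 :: "real \<Rightarrow> complex \<Rightarrow> real" where
  "rate_RD2 gD hRD = log 2 (1 + gD * (cmod hRD)\<^sup>2)"

definition secrecy_cap2 :: "real \<Rightarrow> real \<Rightarrow> real \<Rightarrow> complex \<Rightarrow> complex \<Rightarrow> complex \<Rightarrow> real" where
  "secrecy_cap2 gR gD gE hSR hRD hSE =
     max (min (rate_SR2 gR gE hSR hSE) (rate_RD2 gD hRD)) 0"

end

theory Submission
  imports Defs
begin

lemma exp_layer:
  fixes r :: real
  shows "ennreal (exp (- r)) = (\<integral>\<^sup>+s. ennreal (exp (- s)) * indicator {r..} s \<partial>lborel)"
proof -
  have "(\<integral>\<^sup>+s. ennreal (exp (- s)) * indicator {r..} s \<partial>lborel) = 0 - (- exp (- r))"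
  proof (rule nn_integral_FTC_atLeast[where F="\<lambda>s. - exp (- s)"])
    have "((\<lambda>s::real. exp (- s)) \<longlongrightarrow> 0) at_top"
      using filterlim_compose[OF exp_at_bot filterlim_uminus_at_bot_at_top] by (simp add: o_def)
    then show "((\<lambda>s::real. - exp (- s)) \<longlongrightarrow> 0) at_top"
      using tendsto_minus by fastforce
  qed (auto intro!: derivative_eq_intros)
  then show ?thesis by simp
qed

lemma disc_measure:
  assumes "0 \<le> t" "t \<le> s"
  shows "emeasure (lborel :: complex measure) {z. t \<le> (cmod z)\<^sup>2 \<and> (cmod z)\<^sup>2 \<le> s} = ennreal (pi * (s - t))"
proof -
  have eq: "{z. t \<le> (cmod z)\<^sup>2 \<and> (cmod z)\<^sup>2 \<le> s} = cball 0 (sqrt s) - ball 0 (sqrt t)"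
  proof (intro set_eqI iffI)
    fix z :: complex assume "z \<in> {z. t \<le> (cmod z)\<^sup>2 \<and> (cmod z)\<^sup>2 \<le> s}"
    then have a: "t \<le> (cmod z)\<^sup>2" "(cmod z)\<^sup>2 \<le> s" by auto
    have "cmod z \<le> sqrt s" using a(2) real_le_rsqrt by blast
    moreover have "sqrt t \<le> cmod z" using a(1) assms(1) by (simp add: real_sqrt_le_iff')
    ultimately show "z \<in> cball 0 (sqrt s) - ball 0 (sqrt t)" by (auto simp: dist_norm)
  next
    fix z :: complex assume "z \<in> cball 0 (sqrt s) - ball 0 (sqrt t)"
    then have a: "cmod z \<le> sqrt s" "sqrt t \<le> cmod z" by (auto simp: dist_norm)
    have "(cmod z)\<^sup>2 \<le> (sqrt s)\<^sup>2" using a(1) by (intro power_mono) auto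
    then have "(cmod z)\<^sup>2 \<le> s" using assms by simp
    moreover have "t \<le> (cmod z)\<^sup>2" using a(2) assms(1) by (simp add: real_sqrt_le_iff')
    ultimately show "z \<in> {z. t \<le> (cmod z)\<^sup>2 \<and> (cmod z)\<^sup>2 \<le> s}" by auto
  qed
  have "emeasure (lborel :: complex measure) (cball 0 (sqrt s) - ball 0 (sqrt t))
     = emeasure lborel (cball (0::complex) (sqrt s)) - emeasure lborel (ball (0::complex) (sqrt t))"
  proof (intro emeasure_Diff)
    have st: "sqrt t \<le> sqrt s" using assms by simp
    show "ball (0::complex) (sqrt t) \<subseteq> cball 0 (sqrt s)"
    proof
      fix x :: complex assume "x \<in> ball 0 (sqrt t)"
      then have "cmod x < sqrt t" by (simp add: dist_norm)
      then have "cmod x \<le> sqrt s" using st by linarith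
      then show "x \<in> cball 0 (sqrt s)" by (simp add: dist_norm)
    qed
  qed (auto simp: emeasure_ball[of "sqrt t" "0::complex"] assms)
  also have "\<dots> = ennreal (pi * s) - ennreal (pi * t)"
    using assms order.trans[OF assms] by (simp add: emeasure_ball[of "sqrt t" "0::complex"] assms emeasure_cball[of "sqrt s" "0::complex"] unit_ball_vol_2)
  also have "\<dots> = ennreal (pi * (s - t))"
    using assms by (simp add: ennreal_minus right_diff_distrib)
  finally show ?thesis using eq by simp
qed

lemma tail_pi:
  assumes t: "0 \<le> t"
  shows "(\<integral>\<^sup>+z. ennreal (exp (- (cmod z)\<^sup>2)) * indicator {z. t \<le> (cmod z)\<^sup>2} z \<partial>(lborel::complex measure))
         = ennreal (pi * exp (- t))"
proof -
  have "(\<integral>\<^sup>+z. ennreal (exp (- (cmod z)\<^sup>2)) * indicator {z. t \<le> (cmod z)\<^sup>2} z \<partial>(lborel::complex measure))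
     = (\<integral>\<^sup>+z. (\<integral>\<^sup>+s. ennreal (exp (- s)) * indicator {(cmod z)\<^sup>2..} s * indicator {z. t \<le> (cmod z)\<^sup>2} z \<partial>lborel) \<partial>(lborel::complex measure))"
    by (subst exp_layer) (simp add: nn_integral_multc)
  also have "\<dots> = (\<integral>\<^sup>+s. (\<integral>\<^sup>+z. ennreal (exp (- s)) * indicator {(cmod z)\<^sup>2..} s * indicator {z. t \<le> (cmod z)\<^sup>2} z \<partial>(lborel::complex measure)) \<partial>lborel)"
    by (rule lborel_pair.Fubini'[symmetric]) (simp add: indicator_def case_prod_beta)
  also have "\<dots> = (\<integral>\<^sup>+s. ennreal (exp (- s)) * emeasure (lborel::complex measure) {z. t \<le> (cmod z)\<^sup>2 \<and> (cmod z)\<^sup>2 \<le> s} \<partial>lborel)"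
  proof (intro nn_integral_cong)
    fix s :: real
    have "(\<integral>\<^sup>+z. ennreal (exp (- s)) * indicator {(cmod z)\<^sup>2..} s * indicator {z. t \<le> (cmod z)\<^sup>2} z \<partial>(lborel::complex measure))
       = (\<integral>\<^sup>+z. ennreal (exp (- s)) * indicator {z. t \<le> (cmod z)\<^sup>2 \<and> (cmod z)\<^sup>2 \<le> s} z \<partial>(lborel::complex measure))"
      by (intro nn_integral_cong) (auto split: split_indicator)
    also have "\<dots> = ennreal (exp (- s)) * emeasure (lborel::complex measure) {z. t \<le> (cmod z)\<^sup>2 \<and> (cmod z)\<^sup>2 \<le> s}"
      by (subst nn_integral_cmult_indicator) auto
    finally show "(\<integral>\<^sup>+z. ennreal (exp (- s)) * indicator {(cmod z)\<^sup>2..} s * indicator {z. t \<le> (cmod z)\<^sup>2} z \<partial>(lborel::complex measure))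
       = ennreal (exp (- s)) * emeasure (lborel::complex measure) {z. t \<le> (cmod z)\<^sup>2 \<and> (cmod z)\<^sup>2 \<le> s}" .
  qed
  also have "\<dots> = (\<integral>\<^sup>+s. ennreal (pi * ((s - t) * exp (- s))) * indicator {t..} s \<partial>lborel)"
  proof (intro nn_integral_cong)
    fix s :: real
    show "ennreal (exp (- s)) * emeasure (lborel::complex measure) {z. t \<le> (cmod z)\<^sup>2 \<and> (cmod z)\<^sup>2 \<le> s}
      = ennreal (pi * ((s - t) * exp (- s))) * indicator {t..} s"
    proof (cases "t \<le> s")
      case True
      then show ?thesis using t by (simp add: disc_measure ennreal_mult'[symmetric] mult_ac)
    next
      case False
      then have e: "{z::complex. t \<le> (cmod z)\<^sup>2 \<and> (cmod z)\<^sup>2 \<le> s} = {}" by auto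
      show ?thesis unfolding e using False by simp
    qed
  qed
  also have "\<dots> = (\<integral>\<^sup>+u. ennreal (pi * ((t + 1 * u - t) * exp (- (t + 1 * u)))) * indicator {t..} (t + 1 * u) \<partial>lborel)"
    by (subst nn_integral_real_affine[where c=1 and t=t]) auto
  also have "\<dots> = (\<integral>\<^sup>+u. ennreal (pi * exp (- t)) * (ennreal (u ^ 1 * exp (- u)) * indicator {0..} u) \<partial>lborel)"
    by (intro nn_integral_cong) (auto split: split_indicator simp: ennreal_mult'[symmetric] exp_add[symmetric] mult_ac)
  also have "\<dots> = ennreal (pi * exp (- t))"
    using nn_intergal_power_times_exp_Ici[of 1] by (subst nn_integral_cmult) auto
  finally show ?thesis .
qed

lemma gauss_total:
  "(\<integral>\<^sup>+z. ennreal (exp (- (cmod z)\<^sup>2)) \<partial>(lborel::complex measure)) = ennreal pi"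
  using tail_pi[of 0] by simp

lemma laplace:
  assumes b: "0 \<le> b"
  shows "(\<integral>\<^sup>+z. ennreal (exp (- (cmod z)\<^sup>2)) * ennreal (exp (- b * (cmod z)\<^sup>2)) \<partial>(lborel::complex measure))
     = ennreal (pi / (1 + b))"
proof -
  define c where "c = sqrt (1 + b)"
  have c: "c > 0" "c\<^sup>2 = 1 + b" using b by (auto simp: c_def)
  have "ennreal pi = (\<integral>\<^sup>+z. ennreal (exp (- (cmod z)\<^sup>2)) \<partial>(lborel::complex measure))"
    by (rule gauss_total[symmetric])
  also have "\<dots> = (\<integral>\<^sup>+z. ennreal (exp (- (cmod z)\<^sup>2)) \<partial>density (distr lborel borel (\<lambda>x. 0 + c *\<^sub>R x)) (\<lambda>_. \<bar>c\<bar> ^ DIM(complex)))"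
    using lborel_affine[of c "0::complex"] c by simp
  also have "\<dots> = (\<integral>\<^sup>+x. ennreal (1 + b) * (ennreal (exp (- (cmod x)\<^sup>2)) * ennreal (exp (- b * (cmod x)\<^sup>2))) \<partial>(lborel::complex measure))"
    using c
    by (simp add: nn_integral_density nn_integral_distr ennreal_mult'[symmetric] exp_add[symmetric]
          power_mult_distrib algebra_simps)
  also have "\<dots> = ennreal (1 + b) * (\<integral>\<^sup>+z. ennreal (exp (- (cmod z)\<^sup>2)) * ennreal (exp (- b * (cmod z)\<^sup>2)) \<partial>(lborel::complex measure))"
    by (rule nn_integral_cmult) measurable
  finally have e: "ennreal pi = ennreal (1 + b) * (\<integral>\<^sup>+z. ennreal (exp (- (cmod z)\<^sup>2)) * ennreal (exp (- b * (cmod z)\<^sup>2)) \<partial>(lborel::complex measure))" .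
  have "ennreal (pi / (1 + b)) = ennreal (1 / (1 + b)) * ennreal pi"
    using b by (simp add: ennreal_mult'[symmetric])
  also have "\<dots> = (ennreal (1 / (1 + b)) * ennreal (1 + b)) * (\<integral>\<^sup>+z. ennreal (exp (- (cmod z)\<^sup>2)) * ennreal (exp (- b * (cmod z)\<^sup>2)) \<partial>(lborel::complex measure))"
    by (subst e) (simp add: mult.assoc)
  also have "ennreal (1 / (1 + b)) * ennreal (1 + b) = 1"
    using b by (subst ennreal_mult'[symmetric]) auto
  finally show ?thesis by simp
qed

lemma ennreal_div_pi: "ennreal (x / pi) = ennreal x * ennreal (1 / pi)"
  by (cases "0 \<le> x") (auto simp: ennreal_mult'[symmetric] ennreal_neg divide_nonpos_pos)

lemma N_tail:
  assumes "0 \<le> t"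
  shows "emeasure (density lborel (\<lambda>z::complex. ennreal (exp (- (cmod z)\<^sup>2) / pi))) {z. t \<le> (cmod z)\<^sup>2}
    = ennreal (exp (- t))"
proof -
  have "emeasure (density lborel (\<lambda>z::complex. ennreal (exp (- (cmod z)\<^sup>2) / pi))) {z. t \<le> (cmod z)\<^sup>2}
     = (\<integral>\<^sup>+z. ennreal (exp (- (cmod z)\<^sup>2)) * indicator {z. t \<le> (cmod z)\<^sup>2} z * ennreal (1 / pi) \<partial>(lborel::complex measure))"
  proof (subst emeasure_density)
    show "{z::complex. t \<le> (cmod z)\<^sup>2} \<in> sets lborel"
    proof -
      have "closed {z::complex. t \<le> (cmod z)\<^sup>2}"
        by (intro closed_Collect_le) (auto intro!: continuous_intros)
      then show ?thesis using borel_closed by simp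
    qed
    show "(\<integral>\<^sup>+z. ennreal (exp (- (cmod z)\<^sup>2) / pi) * indicator {z. t \<le> (cmod z)\<^sup>2} z \<partial>lborel) =
      (\<integral>\<^sup>+z. ennreal (exp (- (cmod z)\<^sup>2)) * indicator {z. t \<le> (cmod z)\<^sup>2} z * ennreal (1 / pi) \<partial>lborel)"
    proof (intro nn_integral_cong)
      fix z :: complex
      show "ennreal (exp (- (cmod z)\<^sup>2) / pi) * indicator {z. t \<le> (cmod z)\<^sup>2} z =
        ennreal (exp (- (cmod z)\<^sup>2)) * indicator {z. t \<le> (cmod z)\<^sup>2} z * ennreal (1 / pi)"
        by (simp only: ennreal_div_pi[of "exp (- (cmod z)\<^sup>2)"] mult_ac)
    qed
  qed measurable
  also have "\<dots> = ennreal (pi * exp (- t)) * ennreal (1 / pi)"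
    by (subst nn_integral_multc) (auto simp: tail_pi assms)
  also have "\<dots> = ennreal (exp (- t))"
    by (subst ennreal_mult'[symmetric]) auto
  finally show ?thesis .
qed

lemma N_laplace:
  assumes "0 \<le> b"
  shows "(\<integral>\<^sup>+z. ennreal (exp (- b * (cmod z)\<^sup>2)) \<partial>density lborel (\<lambda>z::complex. ennreal (exp (- (cmod z)\<^sup>2) / pi)))
    = ennreal (1 / (1 + b))"
proof -
  have "(\<integral>\<^sup>+z. ennreal (exp (- b * (cmod z)\<^sup>2)) \<partial>density lborel (\<lambda>z::complex. ennreal (exp (- (cmod z)\<^sup>2) / pi)))
     = (\<integral>\<^sup>+z. ennreal (exp (- (cmod z)\<^sup>2)) * ennreal (exp (- b * (cmod z)\<^sup>2)) * ennreal (1 / pi) \<partial>(lborel::complex measure))"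
  proof (subst nn_integral_density)
    show "(\<integral>\<^sup>+z. ennreal (exp (- (cmod z)\<^sup>2) / pi) * ennreal (exp (- b * (cmod z)\<^sup>2)) \<partial>lborel) =
      (\<integral>\<^sup>+z. ennreal (exp (- (cmod z)\<^sup>2)) * ennreal (exp (- b * (cmod z)\<^sup>2)) * ennreal (1 / pi) \<partial>lborel)"
    proof (intro nn_integral_cong)
      fix z :: complex
      show "ennreal (exp (- (cmod z)\<^sup>2) / pi) * ennreal (exp (- b * (cmod z)\<^sup>2)) =
        ennreal (exp (- (cmod z)\<^sup>2)) * ennreal (exp (- b * (cmod z)\<^sup>2)) * ennreal (1 / pi)"
        by (simp only: ennreal_div_pi[of "exp (- (cmod z)\<^sup>2)"] mult_ac)
    qed
  qed measurable
  also have "\<dots> = ennreal (pi / (1 + b)) * ennreal (1 / pi)"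
    using laplace[OF assms] by (subst nn_integral_multc) simp_all
  also have "\<dots> = ennreal (1 / (1 + b))"
    using assms by (subst ennreal_mult'[symmetric]) auto
  finally show ?thesis .
qed

lemma rate_iff:
  fixes gR gD gE R :: real and d e r :: complex
  assumes "gR > 0" "gD > 0" "gE > 0" "R > 0"
  shows "secrecy_cap2 gR gD gE r d e < R \<longleftrightarrow>
     \<not> ((2 powr R - 1) / gD \<le> (cmod d)\<^sup>2 \<and>
        (2 powr R - 1) / gR + (2 powr R / gR * gE) * (cmod e)\<^sup>2 \<le> (cmod r)\<^sup>2)"
proof -
  define p where "p = (cmod r)\<^sup>2"
  define q where "q = (cmod e)\<^sup>2"
  define u where "u = (cmod d)\<^sup>2"
  have pq: "0 \<le> p" "0 \<le> q" "0 \<le> u" by (auto simp: p_def q_def u_def)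
  have pos1: "0 < 1 + gD * u" "0 < 1 + gR * p" "0 < 1 + gE * q"
    using pq assms by (auto intro: add_pos_nonneg)
  have pos2: "0 < (1 + gR * p) / (1 + gE * q)" using pos1 by simp
  have y1: "R \<le> rate_RD2 gD d \<longleftrightarrow> 2 powr R \<le> 1 + gD * u"
    unfolding rate_RD2_def u_def[symmetric] by (rule le_log_iff) (use pos1 in auto)
  have y2: "(2 powr R \<le> 1 + gD * u) \<longleftrightarrow> (2 powr R - 1) / gD \<le> u"
    using assms(2) by (simp add: pos_divide_le_eq) (auto simp: mult.commute)
  have x1: "R \<le> rate_SR2 gR gE r e \<longleftrightarrow> 2 powr R \<le> (1 + gR * p) / (1 + gE * q)"
    unfolding rate_SR2_def p_def[symmetric] q_def[symmetric] by (rule le_log_iff) (use pos2 in auto)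
  have x2: "(2 powr R \<le> (1 + gR * p) / (1 + gE * q)) \<longleftrightarrow> 2 powr R * (1 + gE * q) \<le> 1 + gR * p"
    using pos1(3) by (simp add: pos_le_divide_eq)
  have x3: "2 powr R * (1 + gE * q) \<le> 1 + gR * p \<longleftrightarrow> (2 powr R - 1) + 2 powr R * gE * q \<le> gR * p"
    by (simp add: algebra_simps)
  have x4: "(2 powr R - 1) + 2 powr R * gE * q \<le> gR * p \<longleftrightarrow> ((2 powr R - 1) + 2 powr R * gE * q) / gR \<le> p"
    using assms(1) by (simp add: pos_divide_le_eq mult.commute)
  have x5: "((2 powr R - 1) + 2 powr R * gE * q) / gR = (2 powr R - 1) / gR + (2 powr R / gR * gE) * q"
    by (simp add: add_divide_distrib)
  have s: "secrecy_cap2 gR gD gE r d e < R \<longleftrightarrow> rate_SR2 gR gE r e < R \<or> rate_RD2 gD d < R"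
    unfolding secrecy_cap2_def max_less_iff_conj min_less_iff_disj using assms(4) by simp
  show ?thesis
    apply (simp only: s flip: p_def q_def u_def)
    apply (simp only: not_le[symmetric] y1 y2 x1 x2 x3 x4 x5)
    by blast
qed

theorem theorem4:
  fixes M :: "'a measure" and hSR hRD hSE :: "'a \<Rightarrow> complex"
    and gR gD gE R :: real
  assumes "prob_space M"
    and "gR > 0" and "gD > 0" and "gE > 0" and "R > 0"
    and "CN01 M hSR" and "CN01 M hRD" and "CN01 M hSE"
    and "prob_space.indep_vars M (\<lambda>_. borel) (\<lambda>i. [hSR, hRD, hSE] ! i) {0..<3}"
  shows "measure M {\<omega> \<in> space M. secrecy_cap2 gR gD gE (hSR \<omega>) (hRD \<omega>) (hSE \<omega>) < R}
         = 1 - exp (- (2 powr R - 1) / gD - (2 powr R - 1) / gR)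
               * (1 / (1 + (2 powr R / gR) * gE))"
proof -
  interpret prob_space M by fact
  define N where "N = density lborel (\<lambda>z::complex. ennreal (exp (- (cmod z)\<^sup>2) / pi))"
  have distrN: "distr M borel h = N" and rv: "random_variable borel h" if "CN01 M h" for h
  proof -
    have d: "distr M lborel h = N" and m: "h \<in> measurable M lborel"
      using that unfolding CN01_def distributed_def N_def by auto
    show "random_variable borel h" using m by simp
    have "distr M borel h = distr M lborel h" by (rule distr_cong) auto
    then show "distr M borel h = N" using d by simp
  qed
  have probN: "prob_space N" using prob_space_distr[OF rv[OF assms(6)]] distrN[OF assms(6)] by simp
  define X where "X = (\<lambda>i. [hSR, hRD, hSE] ! i)"
  have ind: "indep_vars (\<lambda>_. borel) X {0..<3}" using assms(9) unfolding X_def by simp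
  have IR: "indep_var (PiM {1} (\<lambda>_. borel)) (\<lambda>\<omega>. restrict (\<lambda>i. X i \<omega>) {1})
        (PiM {0,2} (\<lambda>_. borel)) (\<lambda>\<omega>. restrict (\<lambda>i. X i \<omega>) {0,2})"
    by (rule indep_var_restrict[OF ind]) auto
  have I2: "indep_var borel hSE borel hSR"
  proof -
    have "indep_var (PiM {2} (\<lambda>_. borel)) (\<lambda>\<omega>. restrict (\<lambda>i. X i \<omega>) {2})
        (PiM {0} (\<lambda>_. borel)) (\<lambda>\<omega>. restrict (\<lambda>i. X i \<omega>) {0})"
      by (rule indep_var_restrict[OF ind]) auto
    then have "indep_var borel ((\<lambda>x. x 2) \<circ> (\<lambda>\<omega>. restrict (\<lambda>i. X i \<omega>) {2}))
        borel ((\<lambda>x. x 0) \<circ> (\<lambda>\<omega>. restrict (\<lambda>i. X i \<omega>) {0}))"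
      by (rule indep_var_compose) measurable
    then show ?thesis by (simp add: o_def X_def)
  qed
  have D2: "distr M (borel \<Otimes>\<^sub>M borel) (\<lambda>\<omega>. (hSE \<omega>, hSR \<omega>)) = N \<Otimes>\<^sub>M N"
    using I2 unfolding indep_var_distribution_eq
    by (simp add: distrN assms(6,7,8))
  have rv2: "(\<lambda>\<omega>. (hSE \<omega>, hSR \<omega>)) \<in> measurable M (borel \<Otimes>\<^sub>M borel)"
    using rv[OF assms(8)] rv[OF assms(6)] by (auto intro: measurable_Pair)
  define a where "a = (2 powr R - 1) / gD"
  define \<alpha> where "\<alpha> = (2 powr R - 1) / gR"
  define \<beta> where "\<beta> = 2 powr R / gR * gE"
  have ge: "1 \<le> 2 powr R" using assms(5) by (simp add: ge_one_powr_ge_zero)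
  have a0: "0 \<le> a" and al0: "0 \<le> \<alpha>" and be0: "0 \<le> \<beta>"
    using ge assms(2-4) by (auto simp: a_def \<alpha>_def \<beta>_def)
  define A where "A = {d::complex. a \<le> (cmod d)\<^sup>2}"
  define B where "B = {(e::complex, r::complex). \<alpha> + \<beta> * (cmod e)\<^sup>2 \<le> (cmod r)\<^sup>2}"
  have Asets: "A \<in> sets borel" unfolding A_def by measurable
  have Bsets: "B \<in> sets (borel \<Otimes>\<^sub>M borel)"
  proof -
    have "B = {p \<in> space (borel \<Otimes>\<^sub>M borel). \<alpha> + \<beta> * (cmod (fst p))\<^sup>2 \<le> (cmod (snd p))\<^sup>2}"
      by (auto simp: B_def space_pair_measure)
    also have "\<dots> \<in> sets (borel \<Otimes>\<^sub>M borel)" by measurable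
    finally show ?thesis .
  qed
  define E where "E = {\<omega> \<in> space M. a \<le> (cmod (hRD \<omega>))\<^sup>2 \<and> \<alpha> + \<beta> * (cmod (hSE \<omega>))\<^sup>2 \<le> (cmod (hSR \<omega>))\<^sup>2}"
  have ev: "{\<omega> \<in> space M. secrecy_cap2 gR gD gE (hSR \<omega>) (hRD \<omega>) (hSE \<omega>) < R} = space M - E"
    using rate_iff[OF assms(2-5)] by (auto simp: E_def a_def \<alpha>_def \<beta>_def)
  have Eev: "E \<in> events"
    unfolding E_def using rv[OF assms(6)] rv[OF assms(7)] rv[OF assms(8)] by measurable
  define A' where "A' = {x \<in> space (PiM {1::nat} (\<lambda>_. borel)). a \<le> (cmod (x 1))\<^sup>2}"
  define B' where "B' = {x \<in> space (PiM {0::nat,2} (\<lambda>_. borel)). \<alpha> + \<beta> * (cmod (x 2))\<^sup>2 \<le> (cmod (x 0))\<^sup>2}"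
  have A'sets: "A' \<in> sets (PiM {1::nat} (\<lambda>_. borel :: complex measure))" unfolding A'_def by measurable
  have B'sets: "B' \<in> sets (PiM {0::nat,2} (\<lambda>_. borel :: complex measure))" unfolding B'_def by measurable
  have probE: "prob E = prob ((\<lambda>\<omega>. restrict (\<lambda>i. X i \<omega>) {1}) -` A' \<inter> space M)
        * prob ((\<lambda>\<omega>. restrict (\<lambda>i. X i \<omega>) {0,2}) -` B' \<inter> space M)"
  proof -
    have "E = (\<lambda>\<omega>. (restrict (\<lambda>i. X i \<omega>) {1}, restrict (\<lambda>i. X i \<omega>) {0,2})) -` (A' \<times> B') \<inter> space M"
      by (auto simp: E_def A'_def B'_def X_def space_PiM)
    then show ?thesis using indep_varD[OF IR A'sets B'sets] by simp
  qed
  have p1: "prob ((\<lambda>\<omega>. restrict (\<lambda>i. X i \<omega>) {1}) -` A' \<inter> space M) = measure N A"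
  proof -
    have "(\<lambda>\<omega>. restrict (\<lambda>i. X i \<omega>) {1}) -` A' \<inter> space M = hRD -` A \<inter> space M"
      by (auto simp: A'_def A_def X_def space_PiM)
    then show ?thesis
      using measure_distr[OF rv[OF assms(7)] Asets] distrN[OF assms(7)] by simp
  qed
  have p2: "prob ((\<lambda>\<omega>. restrict (\<lambda>i. X i \<omega>) {0,2}) -` B' \<inter> space M) = measure (N \<Otimes>\<^sub>M N) B"
  proof -
    have "(\<lambda>\<omega>. restrict (\<lambda>i. X i \<omega>) {0,2}) -` B' \<inter> space M = (\<lambda>\<omega>. (hSE \<omega>, hSR \<omega>)) -` B \<inter> space M"
      by (auto simp: B'_def B_def X_def space_PiM)
    then show ?thesis
      using measure_distr[OF rv2 Bsets] D2 by simp
  qed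
  interpret N: prob_space N by (rule probN)
  interpret NN: pair_prob_space N N ..
  have sN: "sets N = sets borel" by (simp add: N_def)
  have eA: "emeasure N A = ennreal (exp (- a))"
    unfolding N_def A_def by (rule N_tail[OF a0])
  have eB: "emeasure (N \<Otimes>\<^sub>M N) B = ennreal (exp (- \<alpha>) * (1 / (1 + \<beta>)))"
  proof -
    have "emeasure (N \<Otimes>\<^sub>M N) B = (\<integral>\<^sup>+e. emeasure N (Pair e -` B) \<partial>N)"
    proof (rule N.emeasure_pair_measure_alt)
      show "B \<in> sets (N \<Otimes>\<^sub>M N)" using Bsets sets_pair_measure_cong[OF sN sN] by simp
    qed
    also have "\<dots> = (\<integral>\<^sup>+e. ennreal (exp (- \<alpha>)) * ennreal (exp (- \<beta> * (cmod e)\<^sup>2)) \<partial>N)"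
    proof (intro nn_integral_cong)
      fix e :: complex
      have "Pair e -` B = {r. \<alpha> + \<beta> * (cmod e)\<^sup>2 \<le> (cmod r)\<^sup>2}" by (auto simp: B_def)
      moreover have "0 \<le> \<alpha> + \<beta> * (cmod e)\<^sup>2" using al0 be0 by simp
      ultimately show "emeasure N (Pair e -` B) = ennreal (exp (- \<alpha>)) * ennreal (exp (- \<beta> * (cmod e)\<^sup>2))"
        unfolding N_def by (simp add: N_tail ennreal_mult'[symmetric] exp_add[symmetric])
    qed
    also have "\<dots> = ennreal (exp (- \<alpha>)) * ennreal (1 / (1 + \<beta>))"
      using N_laplace[OF be0] unfolding N_def by (subst nn_integral_cmult) simp_all
    also have "\<dots> = ennreal (exp (- \<alpha>) * (1 / (1 + \<beta>)))"
      by (simp add: ennreal_mult'[symmetric])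
    finally show ?thesis .
  qed
  have mA: "measure N A = exp (- a)" using eA by (simp add: measure_def)
  have mB: "measure (N \<Otimes>\<^sub>M N) B = exp (- \<alpha>) * (1 / (1 + \<beta>))" using eB be0 by (simp add: measure_def)
  have "measure M {\<omega> \<in> space M. secrecy_cap2 gR gD gE (hSR \<omega>) (hRD \<omega>) (hSE \<omega>) < R}
      = 1 - prob E" unfolding ev using prob_compl[OF Eev] by simp
  also have "\<dots> = 1 - exp (- (2 powr R - 1) / gD - (2 powr R - 1) / gR) * (1 / (1 + (2 powr R / gR) * gE))"
  proof -
    have "- (2 powr R - 1) / gD - (2 powr R - 1) / gR = (- a) + (- \<alpha>)"
      using assms(2,3) by (simp add: a_def \<alpha>_def field_simps)
    then have "exp (- (2 powr R - 1) / gD - (2 powr R - 1) / gR) = exp (- a) * exp (- \<alpha>)"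
      by (simp only: exp_add)
    then show ?thesis unfolding probE p1 p2 mA mB \<beta>_def by simp
  qed
  finally show ?thesis .
qed

end
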